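(* Let $l:\mathbb{Z}^2\to\mathcal{L}^4_0$ be a principal contact element net with one family of spherical parameter lines $\{l_{i,j}\}_{i\in\mathbb{Z}}$. Generically, $\mathcal{L}_A^3l$ is Goursat degenerate and $\mathcal{L}_B^2l$ is Laplace degenerate.
   Context: Let $e_1,\dots,e_6$ be an orthonormal basis of $\mathbb{R}^{4,2}$ with $\langle e_i,e_i\rangle=1$ for $i\le4$ and $\langle e_5,e_5\rangle=\langle e_6,e_6\rangle=-1$. The Lie quadric is $\mathcal{L}^4=\{[x]\in\mathbb{R}\mathrm{P}^5:\langle x,x\rangle=0\}$ and $\mathcal{L}^4_0$ the set of lines contained in $\mathcal{L}^4$. A discrete line congruence is a map $l$ from $\mathbb{Z}^2$ to lines in a projective space such that neighbouring lines intersect; a principal contact element net is a discrete line congruence with values in $\mathcal{L}^4_0$. $\vee$ denotes projective span. The net has one family of spherical parameter lines $\{l_{i,j}\}_{i}$ if for every $j$ the span $\bigvee_i l_{i,j}$ is $4$-dimensional and the planes $\{l_{i,j}\vee l_{i,j+1}\}_{i\in\mathbb{Z}}$ are concurrent. Laplace transforms of line congruences: $\mathcal{L}_Al(i,j)=(l_{i,j}\vee l_{i+1,j})\cap(l_{i,j+1}\vee l_{i+1,j+1})$, $\mathcal{L}_Bl(i,j)=(l_{i,j}\vee l_{i,j+1})\cap(l_{i+1,j}\vee l_{i+1,j+1})$ (again line congruences), with iterates. $\mathcal{L}_A^kl$ is Goursat degenerate if $\mathcal{L}_A^kl(i,j)$ is independent of $i$; $\mathcal{L}_B^kl$ is Laplace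 degenerate if $\mathcal{L}_B^kl(i,j)$ is independent of $i$. "Generically" means for data in general position subject to the stated constraints. *)

theory Defs
  imports "HOL-Analysis.Analysis"
begin

text \<open>Model: projective space RP^5 = lines through 0 in real^6.  A projective
subspace of projective dimension d is a linear subspace of dimension d+1.
Projective points are 1-dim subspaces, projective lines 2-dim subspaces, planes
3-dim subspaces.\<close>

type_synonym vec6 = "real^6"

text \<open>The inner product of R^{4,2} in the orthonormal basis e1..e6.\<close>
definition lie_form :: "vec6 \<Rightarrow> vec6 \<Rightarrow> real" where
  "lie_form x y = x$1*y$1 + x$2*y$2 + x$3*y$3 + x$4*y$4 - x$5*y$5 - x$6*y$6"

definition proj_line :: "vec6 set \<Rightarrow> bool" where
  "proj_line L \<longleftrightarrow> subspace L \<and> dim L = 2"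

definition lie_line :: "vec6 set \<Rightarrow> bool" where
  "lie_line L \<longleftrightarrow> proj_line L \<and> (\<forall>x\<in>L. lie_form x x = 0)"

definition meets :: "vec6 set \<Rightarrow> vec6 set \<Rightarrow> bool" where
  "meets A B \<longleftrightarrow> (\<exists>x. x \<noteq> 0 \<and> x \<in> A \<and> x \<in> B)"

definition pjoin :: "vec6 set \<Rightarrow> vec6 set \<Rightarrow> vec6 set" where
  "pjoin A B = span (A \<union> B)"

definition line_congruence :: "(int \<Rightarrow> int \<Rightarrow> vec6 set) \<Rightarrow> bool" where
  "line_congruence l \<longleftrightarrow>
     (\<forall>i j. proj_line (l i j) \<and> meets (l i j) (l (i+1) j) \<and> meets (l i j) (l i (j+1)))"

definition principal_contact_element_net :: "(int \<Rightarrow> int \<Rightarrow> vec6 set) \<Rightarrow> bool" where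
  "principal_contact_element_net l \<longleftrightarrow> line_congruence l \<and> (\<forall>i j. lie_line (l i j))"

definition row_span :: "(int \<Rightarrow> int \<Rightarrow> vec6 set) \<Rightarrow> int \<Rightarrow> vec6 set" where
  "row_span l j = span (\<Union>i. l i j)"

text \<open>One family of spherical parameter lines {l i j}_i: for every j the span is
4-dimensional (projectively, i.e. linear dimension 5) and the planes
l i j \<or> l i (j+1), i \<in> Z, are concurrent (have a common point).\<close>
definition spherical_i_family :: "(int \<Rightarrow> int \<Rightarrow> vec6 set) \<Rightarrow> bool" where
  "spherical_i_family l \<longleftrightarrow>
     (\<forall>j. dim (row_span l j) = 5 \<and>
          (\<forall>i. dim (pjoin (l i j) (l i (j+1))) = 3) \<and>
          (\<exists>p. p \<noteq> 0 \<and> (\<forall>i. p \<in> pjoin (l i j) (l i (j+1)))))"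

definition laplace_A :: "(int \<Rightarrow> int \<Rightarrow> vec6 set) \<Rightarrow> int \<Rightarrow> int \<Rightarrow> vec6 set" where
  "laplace_A l i j = pjoin (l i j) (l (i+1) j) \<inter> pjoin (l i (j+1)) (l (i+1) (j+1))"

definition laplace_B :: "(int \<Rightarrow> int \<Rightarrow> vec6 set) \<Rightarrow> int \<Rightarrow> int \<Rightarrow> vec6 set" where
  "laplace_B l i j = pjoin (l i j) (l i (j+1)) \<inter> pjoin (l (i+1) j) (l (i+1) (j+1))"

definition goursat_degenerate_A :: "nat \<Rightarrow> (int \<Rightarrow> int \<Rightarrow> vec6 set) \<Rightarrow> bool" where
  "goursat_degenerate_A k l \<longleftrightarrow> (\<forall>i i' j. (laplace_A ^^ k) l i j = (laplace_A ^^ k) l i' j)"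

definition laplace_degenerate_B :: "nat \<Rightarrow> (int \<Rightarrow> int \<Rightarrow> vec6 set) \<Rightarrow> bool" where
  "laplace_degenerate_B k l \<longleftrightarrow> (\<forall>i i' j. (laplace_B ^^ k) l i j = (laplace_B ^^ k) l i' j)"

text \<open>Genericity (general position) assumptions:
 (1) the iterated Laplace transforms that occur are well defined, i.e. are lines;
 (2) the hyperplanes spanned by four consecutive spherical parameter lines are in
     general position (their intersection is a line);
 (3) the concurrency points of two consecutive families of planes are distinct
     (the common intersections of the two families of planes share no point).\<close>
definition generic_net :: "(int \<Rightarrow> int \<Rightarrow> vec6 set) \<Rightarrow> bool" where
  "generic_net l \<longleftrightarrow>
     (\<forall>k\<in>{1..3}. \<forall>i j. proj_line ((laplace_A ^^ k) l i j)) \<and>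
     (\<forall>k\<in>{1..2}. \<forall>i j. proj_line ((laplace_B ^^ k) l i j)) \<and>
     (\<forall>j. dim (row_span l j \<inter> row_span l (j+1) \<inter> row_span l (j+2) \<inter> row_span l (j+3)) = 2) \<and>
     (\<forall>j. (\<Inter>i. pjoin (l i j) (l i (j+1))) \<inter> (\<Inter>i. pjoin (l i (j+1)) (l i (j+2))) = {0})"

end

theory Submission
  imports Defs
begin

lemma pjoin_sub: "A \<subseteq> S \<Longrightarrow> B \<subseteq> S \<Longrightarrow> subspace S \<Longrightarrow> pjoin A B \<subseteq> S"
  unfolding pjoin_def by (rule span_minimal) auto

lemma A_step:
  assumes "\<And>i j. M i j \<subseteq> S j" and "\<And>j. subspace (S j)"
  shows "laplace_A M i j \<subseteq> S j \<inter> S (j+1)"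
  unfolding laplace_A_def using assms pjoin_sub by (metis Int_mono)

lemma eq_of_dim:
  fixes S T :: "vec6 set"
  assumes "subspace S" "subspace T" "S \<subseteq> T" "dim T = 2" "dim S = 2"
  shows "S = T"
  using assms by (intro subspace_dim_equal) auto

lemma partA:
  assumes sph: "spherical_i_family l" and gen: "generic_net l"
  shows "goursat_degenerate_A 3 l"
proof -
  define R where "R j = row_span l j" for j
  have sR: "subspace (R j)" for j by (simp add: R_def row_span_def)
  have l1: "l i j \<subseteq> R j" for i j
    unfolding R_def row_span_def by (meson UN_upper UNIV_I span_superset subset_trans)
  define S1 where "S1 j = R j \<inter> R (j+1)" for j
  define S2 where "S2 j = S1 j \<inter> S1 (j+1)" for j
  have sS1: "subspace (S1 j)" for j using sR by (simp add: S1_def subspace_inter)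
  have sS2: "subspace (S2 j)" for j using sS1 by (simp add: S2_def subspace_inter)
  have a1: "laplace_A l i j \<subseteq> S1 j" for i j using A_step[of l R, OF l1 sR] S1_def by simp
  have a2: "laplace_A (laplace_A l) i j \<subseteq> S2 j" for i j
    using A_step[of "laplace_A l" S1, OF a1 sS1] S2_def by simp
  have a3: "laplace_A (laplace_A (laplace_A l)) i j \<subseteq> S2 j \<inter> S2 (j+1)" for i j
    using A_step[of "laplace_A (laplace_A l)" S2, OF a2 sS2] by simp
  define T where "T j = R j \<inter> R (j+1) \<inter> R (j+2) \<inter> R (j+3)" for j
  have ST: "S2 j \<inter> S2 (j+1) = T j" for j
    unfolding S2_def S1_def T_def by (auto simp: add.assoc)
  have sT: "subspace (T j)" for j using sS2 ST by (metis subspace_inter)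
  have dT: "dim (T j) = 2" for j using gen unfolding generic_net_def T_def R_def by simp
  have pl: "proj_line ((laplace_A ^^ 3) l i j)" for i j using gen unfolding generic_net_def by auto
  have eq: "(laplace_A ^^ 3) l i j = T j" for i j
  proof -
    have e: "(laplace_A ^^ 3) l = laplace_A (laplace_A (laplace_A l))"
      by (simp add: numeral_3_eq_3)
    show ?thesis
      apply (rule eq_of_dim)
      using pl[of i j] a3[of i j] sT dT ST unfolding proj_line_def e by auto
  qed
  show ?thesis unfolding goursat_degenerate_A_def using eq by simp
qed

lemma partB:
  assumes sph: "spherical_i_family l" and gen: "generic_net l"
  shows "laplace_degenerate_B 2 l"
proof -
  define Q where "Q j = (\<Inter>i. pjoin (l i j) (l i (j+1)))" for j
  have sQ: "subspace (Q j)" for j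
    unfolding Q_def pjoin_def by (auto intro!: subspace_Inter)
  have "\<forall>j. \<exists>p. p \<noteq> 0 \<and> p \<in> Q j" using sph unfolding spherical_i_family_def Q_def by blast
  then obtain P where P: "\<And>j. P j \<noteq> 0" "\<And>j. P j \<in> Q j" by metis
  have disj: "Q j \<inter> Q (j+1) = {0}" for j
    using gen unfolding generic_net_def Q_def by (simp add: add.assoc)
  have PB: "P j \<in> laplace_B l i j" for i j
    using P(2)[of j] unfolding Q_def laplace_B_def by auto
  have PB2: "P j \<in> (laplace_B ^^ 2) l i j \<and> P (j+1) \<in> (laplace_B ^^ 2) l i j" for i j
  proof -
    have e: "(laplace_B ^^ 2) l = laplace_B (laplace_B l)" by (simp add: numeral_2_eq_2)
    have "P j \<in> pjoin (laplace_B l i' j) (laplace_B l i' (j+1))" for i'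
      using PB[of j i'] unfolding pjoin_def by (simp add: span_base)
    moreover have "P (j+1) \<in> pjoin (laplace_B l i' j) (laplace_B l i' (j+1))" for i'
      using PB[of "j+1" i'] unfolding pjoin_def by (simp add: span_base)
    ultimately show ?thesis unfolding e laplace_B_def[of "laplace_B l"] by auto
  qed
  have ind: "independent {P (j+1), P j}" for j
  proof (rule independent_insertI)
    show "independent {P j}" using P(1) by simp
    show "P (j+1) \<notin> span {P j}"
    proof
      assume "P (j+1) \<in> span {P j}"
      then obtain k where k: "P (j+1) = k *\<^sub>R P j" by (auto simp: span_singleton)
      have "P (j+1) \<in> Q j" using k P(2)[of j] sQ[of j] by (simp add: subspace_scale)
      then have "P (j+1) \<in> Q j \<inter> Q (j+1)" using P(2) by simp
      then show False using disj[of j] P(1)[of "j+1"] by simp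
    qed
  qed
  have neq: "P (j+1) \<noteq> P j" for j
  proof
    assume "P (j+1) = P j"
    then have "P j \<in> Q j \<inter> Q (j+1)" using P(2)[of j] P(2)[of "j+1"] by simp
    then show False using disj[of j] P(1)[of j] by simp
  qed
  have dS: "dim (span {P (j+1), P j}) = 2" for j
    using dim_span_eq_card_independent[OF ind[of j]] neq[of j] by simp
  have pl: "proj_line ((laplace_B ^^ 2) l i j)" for i j using gen unfolding generic_net_def by auto
  have eq: "span {P (j+1), P j} = (laplace_B ^^ 2) l i j" for i j
    apply (rule eq_of_dim)
       apply simp
    using pl[of i j] apply (simp add: proj_line_def)
    using pl[of i j] PB2[of j i] apply (intro span_minimal) apply (auto simp: proj_line_def)[2]
    using pl[of i j] PB2[of j i] dS[of j] unfolding proj_line_def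
    by (auto intro!: span_minimal)
  show ?thesis unfolding laplace_degenerate_B_def using eq by metis
qed

theorem proposition5p6:
  fixes l :: "int \<Rightarrow> int \<Rightarrow> (real^6) set"
  assumes "principal_contact_element_net l"
    and "spherical_i_family l"
    and "generic_net l"
  shows "goursat_degenerate_A 3 l \<and> laplace_degenerate_B 2 l"
  using partA partB assms by blast

end
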